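(* Let $K=K(n)=o\left(\frac{\log n}{\log\log n}\right)$. For all sufficiently large $n$ there exists an $n$-vertex graph $G(V,E)$ with maximum degree $\Delta$ such that if for each $v\in V$ a set $L(v)$ of $K$ colors is chosen independently and uniformly at random from $[\Delta+1]$, then with probability $1-o(1)$ there is no proper coloring $\mathcal{C}:V\to[\Delta+1]$ of $G$ with $\mathcal{C}(v)\in L(v)$ for all $v\in V$.
   Context: $[t]=\{1,\ldots,t\}$; a proper coloring has no monochromatic edge. *)

theory Defs
  imports Complex_Main "HOL-Library.Landau_Symbols"
begin

definition graph_on :: "nat \<Rightarrow> (nat \<Rightarrow> nat \<Rightarrow> bool) \<Rightarrow> bool" where
  "graph_on n E \<longleftrightarrow> (\<forall>u v. E u v \<longrightarrow> u < n \<and> v < n \<and> u \<noteq> v \<and> E v u)"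

definition degree :: "nat \<Rightarrow> (nat \<Rightarrow> nat \<Rightarrow> bool) \<Rightarrow> nat \<Rightarrow> nat" where
  "degree n E v = card {u. u < n \<and> E v u}"

definition max_degree :: "nat \<Rightarrow> (nat \<Rightarrow> nat \<Rightarrow> bool) \<Rightarrow> nat" where
  "max_degree n E = Max (insert 0 (degree n E ` {..<n}))"

(* The uniform distribution on this
   finite set is exactly: each L(v) chosen independently and uniformly among
   the k-subsets of [c]. *)
definition list_assignments :: "nat \<Rightarrow> nat \<Rightarrow> nat \<Rightarrow> (nat \<Rightarrow> nat set) set" where
  "list_assignments n k c =
     {L. (\<forall>v<n. L v \<subseteq> {1..c} \<and> card (L v) = k) \<and> (\<forall>v. n \<le> v \<longrightarrow> L v = {})}"

definition list_colorable :: "nat \<Rightarrow> (nat \<Rightarrow> nat \<Rightarrow> bool) \<Rightarrow> (nat \<Rightarrow> nat set) \<Rightarrow> bool" where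
  "list_colorable n E L \<longleftrightarrow>
     (\<exists>C :: nat \<Rightarrow> nat. (\<forall>v<n. C v \<in> L v) \<and> (\<forall>u v. u < n \<and> v < n \<and> E u v \<longrightarrow> C u \<noteq> C v))"

definition prob_colorable :: "nat \<Rightarrow> (nat \<Rightarrow> nat \<Rightarrow> bool) \<Rightarrow> nat \<Rightarrow> nat \<Rightarrow> real" where
  "prob_colorable n E k c =
     real (card {L \<in> list_assignments n k c. list_colorable n E L}) / real (card (list_assignments n k c))"

end

theory Submission
  imports Defs "HOL-Real_Asymp.Real_Asymp"
begin

definition SA :: "nat set set \<Rightarrow> nat \<Rightarrow> (nat \<Rightarrow> nat set) set" where
  "SA A N = {L. (\<forall>v<N. L v \<in> A) \<and> (\<forall>v. N \<le> v \<longrightarrow> L v = {})}"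

definition trunc :: "nat \<Rightarrow> (nat \<Rightarrow> nat set) \<Rightarrow> nat \<Rightarrow> nat set" where
  "trunc N L = (\<lambda>v. if v < N then L v else {})"

definition shift :: "nat \<Rightarrow> nat \<Rightarrow> (nat \<Rightarrow> nat set) \<Rightarrow> nat \<Rightarrow> nat set" where
  "shift N m L = (\<lambda>i. if i < m then L (N + i) else {})"

definition glue :: "nat \<Rightarrow> (nat \<Rightarrow> nat set) \<Rightarrow> (nat \<Rightarrow> nat set) \<Rightarrow> nat \<Rightarrow> nat set" where
  "glue N L g = (\<lambda>v. if v < N then L v else g (v - N))"

lemma split_card:
  "card {L \<in> SA A (N + m). P (trunc N L) \<and> Q (shift N m L)} =
   card {L \<in> SA A N. P L} * card {g \<in> SA A m. Q g}"
proof -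
  have "bij_betw (\<lambda>L. (trunc N L, shift N m L)) {L \<in> SA A (N + m). P (trunc N L) \<and> Q (shift N m L)}
          ({L \<in> SA A N. P L} \<times> {g \<in> SA A m. Q g})"
  proof (rule bij_betw_byWitness[where f' = "\<lambda>(L, g). glue N L g"])
    show "\<forall>a\<in>{L \<in> SA A (N + m). P (trunc N L) \<and> Q (shift N m L)}.
            (case (trunc N a, shift N m a) of (L, g) \<Rightarrow> glue N L g) = a"
      by (auto simp: SA_def trunc_def shift_def glue_def fun_eq_iff)
    show "\<forall>a'\<in>{L \<in> SA A N. P L} \<times> {g \<in> SA A m. Q g}.
            (trunc N (case a' of (L, g) \<Rightarrow> glue N L g), shift N m (case a' of (L, g) \<Rightarrow> glue N L g)) = a'"
    proof
      fix a' assume a': "a' \<in> {L \<in> SA A N. P L} \<times> {g \<in> SA A m. Q g}"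
      obtain L g where lg: "a' = (L, g)" by (cases a')
      have L: "L \<in> SA A N" and g: "g \<in> SA A m" using a' lg by auto
      have "trunc N (glue N L g) = L"
        using L by (auto simp: SA_def trunc_def glue_def fun_eq_iff)
      moreover have "shift N m (glue N L g) = g"
        using g by (auto simp: SA_def shift_def glue_def fun_eq_iff)
      ultimately show "(trunc N (case a' of (L, g) \<Rightarrow> glue N L g), shift N m (case a' of (L, g) \<Rightarrow> glue N L g)) = a'"
        using lg by simp
    qed
    show "(\<lambda>L. (trunc N L, shift N m L)) ` {L \<in> SA A (N + m). P (trunc N L) \<and> Q (shift N m L)}
          \<subseteq> {L \<in> SA A N. P L} \<times> {g \<in> SA A m. Q g}"
      by (auto simp: SA_def trunc_def shift_def)
    show "(\<lambda>(L, g). glue N L g) ` ({L \<in> SA A N. P L} \<times> {g \<in> SA A m. Q g})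
          \<subseteq> {L \<in> SA A (N + m). P (trunc N L) \<and> Q (shift N m L)}"
    proof
      fix x assume "x \<in> (\<lambda>(L, g). glue N L g) ` ({L \<in> SA A N. P L} \<times> {g \<in> SA A m. Q g})"
      then obtain L g where x: "x = glue N L g" and L: "L \<in> SA A N" "P L" and g: "g \<in> SA A m" "Q g"
        by auto
      have "trunc N (glue N L g) = L"
        using L by (auto simp: SA_def trunc_def glue_def fun_eq_iff)
      moreover have "shift N m (glue N L g) = g"
        using g by (auto simp: SA_def shift_def glue_def fun_eq_iff)
      moreover have "glue N L g \<in> SA A (N + m)"
        using L g unfolding SA_def glue_def by auto
      ultimately show "x \<in> {L \<in> SA A (N + m). P (trunc N L) \<and> Q (shift N m L)}"
        using x L g by simp
    qed
  qed
  then show ?thesis by (simp add: bij_betw_same_card card_cartesian_product)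
qed

lemma card_SA1: "card (SA A 1) = card A"
proof -
  have "bij_betw (\<lambda>L. L 0) (SA A 1) A"
    by (rule bij_betw_byWitness[where f' = "\<lambda>a v. if v = 0 then a else {}"])
       (auto simp: SA_def fun_eq_iff)
  then show ?thesis by (simp add: bij_betw_same_card)
qed

lemma card_SA: "card (SA A N) = card A ^ N"
proof (induction N)
  case 0
  have "SA A 0 = {\<lambda>_. {}}" by (auto simp: SA_def)
  then show ?case by simp
next
  case (Suc N)
  have "card {L \<in> SA A (N + 1). True \<and> True} = card {L \<in> SA A N. True} * card {g \<in> SA A 1. True}"
    by (rule split_card)
  then show ?case using Suc card_SA1 by simp
qed

definition NC :: "nat \<Rightarrow> (nat \<Rightarrow> nat set) \<Rightarrow> bool" where
  "NC m L \<longleftrightarrow> (\<exists>i<m. L i \<noteq> L 0)"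

definition GS :: "nat set set \<Rightarrow> nat \<Rightarrow> nat \<Rightarrow> (nat \<Rightarrow> nat set) set" where
  "GS A m t = {L \<in> SA A (t * m). \<forall>j<t. NC m (shift (j * m) m L)}"

lemma shift_trunc:
  assumes "j < t"
  shows "shift (j * m) m (trunc (t * m) L) = shift (j * m) m L"
proof -
  have "(j + 1) * m \<le> t * m" using assms by (intro mult_le_mono1) simp
  then show ?thesis by (auto simp: shift_def trunc_def fun_eq_iff)
qed

lemma card_GS: "card (GS A m t) = card {g \<in> SA A m. NC m g} ^ t"
proof (induction t)
  case 0
  have "GS A m 0 = {\<lambda>_. {}}" by (auto simp: GS_def SA_def)
  then show ?case by simp
next
  case (Suc t)
  have eq: "GS A m (Suc t) = {L \<in> SA A (t * m + m).
      (\<lambda>L. \<forall>j<t. NC m (shift (j * m) m L)) (trunc (t * m) L) \<and> NC m (shift (t * m) m L)}"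
    using shift_trunc[of _ t m] by (auto simp: GS_def add.commute less_Suc_eq)
  have "card (GS A m (Suc t)) = card (GS A m t) * card {g \<in> SA A m. NC m g}"
    unfolding eq by (subst split_card) (simp add: GS_def)
  then show ?case using Suc by simp
qed

lemma card_NC:
  assumes "finite A" "m \<ge> 1"
  shows "card {g \<in> SA A m. NC m g} = card A ^ m - card A"
proof -
  have sub: "{g \<in> SA A m. \<not> NC m g} \<subseteq> SA A m" by auto
  have "bij_betw (\<lambda>L. L 0) {g \<in> SA A m. \<not> NC m g} A"
  proof (rule bij_betw_byWitness[where f' = "\<lambda>a v. if v < m then a else {}"])
    show "\<forall>g\<in>{g \<in> SA A m. \<not> NC m g}. (\<lambda>v. if v < m then g 0 else {}) = g"
    proof
      fix g assume g: "g \<in> {g \<in> SA A m. \<not> NC m g}"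
      then have g1: "\<forall>v. m \<le> v \<longrightarrow> g v = {}" and g2: "\<forall>i<m. g i = g 0"
        unfolding SA_def NC_def by blast+
      show "(\<lambda>v. if v < m then g 0 else {}) = g"
      proof
        fix v show "(if v < m then g 0 else {}) = g v"
        proof (cases "v < m")
          case True
          then have "g v = g 0" using g2 by blast
          then show ?thesis using True by simp
        next
          case False
          then show ?thesis using g1 by simp
        qed
      qed
    qed
    show "\<forall>a'\<in>A. (if 0 < m then a' else {}) = a'" using assms by simp
    show "(\<lambda>L. L 0) ` {g \<in> SA A m. \<not> NC m g} \<subseteq> A"
      using assms unfolding SA_def by auto
    show "(\<lambda>a v. if v < m then a else {}) ` A \<subseteq> {g \<in> SA A m. \<not> NC m g}"
      using assms unfolding SA_def NC_def by auto
  qed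
  then have c: "card {g \<in> SA A m. \<not> NC m g} = card A" by (simp add: bij_betw_same_card)
  have fin: "finite (SA A m)"
  proof (cases "A = {}")
    case True
    have "SA A m = {}"
    proof (rule ccontr)
      assume "SA A m \<noteq> {}"
      then obtain L where "L \<in> SA A m" by blast
      then have "L 0 \<in> A" using assms unfolding SA_def by auto
      then show False using True by simp
    qed
    then show ?thesis by simp
  next
    case False
    then have "card A > 0" using assms by (simp add: card_gt_0_iff)
    then have "card (SA A m) > 0" by (simp add: card_SA)
    then show ?thesis by (rule card_ge_0_finite)
  qed
  have eq: "{g \<in> SA A m. NC m g} = SA A m - {g \<in> SA A m. \<not> NC m g}" by auto
  have "card (SA A m - {g \<in> SA A m. \<not> NC m g}) = card (SA A m) - card {g \<in> SA A m. \<not> NC m g}"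
    using finite_subset[OF sub fin] sub by (rule card_Diff_subset)
  then show ?thesis using eq c card_SA[of A m] by simp
qed


definition CG :: "nat \<Rightarrow> nat \<Rightarrow> nat \<Rightarrow> nat \<Rightarrow> bool" where
  "CG m t u v \<longleftrightarrow> u < t * m \<and> v < t * m \<and> u div m = v div m \<and> u \<noteq> v"

lemma blk_iff:
  fixes u m b :: nat
  assumes "0 < m"
  shows "u div m = b \<longleftrightarrow> b * m \<le> u \<and> u < b * m + m"
proof
  assume h: "u div m = b"
  have "u div m * m \<le> u" by simp
  moreover have "u < (u div m + 1) * m"
    using assms by (subst div_less_iff_less_mult[symmetric]) simp_all
  ultimately show "b * m \<le> u \<and> u < b * m + m" using h by simp
next
  assume "b * m \<le> u \<and> u < b * m + m"
  then show "u div m = b" by (intro div_nat_eqI) (simp_all add: mult.commute)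
qed

lemma colorable_NC:
  assumes m: "m = K + 1" and L: "L \<in> SA A n"
    and A: "A = {B. B \<subseteq> {1..c} \<and> card B = K}"
    and tn: "t * m \<le> n" and col: "list_colorable n (CG m t) L" and j: "j < t"
  shows "NC m (shift (j * m) m L)"
proof (rule ccontr)
  assume "\<not> NC m (shift (j * m) m L)"
  then have const: "\<And>i. i < m \<Longrightarrow> L (j * m + i) = L (j * m)"
    using m by (auto simp: NC_def shift_def)
  from col obtain C where C1: "\<forall>v<n. C v \<in> L v"
    and C2: "\<forall>u v. u < n \<and> v < n \<and> CG m t u v \<longrightarrow> C u \<noteq> C v"
    unfolding list_colorable_def by blast
  have jm: "(j + 1) * m \<le> t * m" using j by (intro mult_le_mono1) simp
  have lt: "\<And>i. i < m \<Longrightarrow> j * m + i < t * m" using jm by simp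
  have dv: "\<And>i. i < m \<Longrightarrow> (j * m + i) div m = j"
    using m by (subst blk_iff) simp_all
  have inj: "inj_on (\<lambda>i. C (j * m + i)) {..<m}"
  proof (rule inj_onI)
    fix i i' assume i: "i \<in> {..<m}" and i': "i' \<in> {..<m}" and eq: "C (j * m + i) = C (j * m + i')"
    show "i = i'"
    proof (rule ccontr)
      assume "i \<noteq> i'"
      then have "CG m t (j * m + i) (j * m + i')"
        using i i' lt dv by (auto simp: CG_def)
      then show False using C2 eq i i' lt tn
        by (metis lessThan_iff order_less_le_trans)
    qed
  qed
  have B: "L (j * m) \<in> A" using L lt[of 0] tn m unfolding SA_def by auto
  have sub: "(\<lambda>i. C (j * m + i)) ` {..<m} \<subseteq> L (j * m)"
  proof
    fix x assume "x \<in> (\<lambda>i. C (j * m + i)) ` {..<m}"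
    then obtain i where i: "i < m" and x: "x = C (j * m + i)" by auto
    have "j * m + i < n" using lt[OF i] tn by simp
    then have "x \<in> L (j * m + i)" using C1 x by simp
    then show "x \<in> L (j * m)" using const[OF i] by simp
  qed
  have fin: "finite (L (j * m))" using B A by (auto dest: finite_subset)
  have "m \<le> card (L (j * m))"
    using card_mono[OF fin sub] card_image[OF inj] by simp
  then show False using B A m by simp
qed

lemma pow_bound:
  fixes x :: real
  assumes "0 \<le> x" "x \<le> 1"
  shows "(1 - x) ^ t \<le> 1 / (1 + real t * x)"
proof -
  have pos: "0 < 1 + real t * x" using assms by (simp add: add_pos_nonneg)
  have "(1 - x) ^ t * (1 + real t * x) \<le> (1 - x) ^ t * (1 + x) ^ t"
    using assms by (intro mult_left_mono Bernoulli_inequality) simp_all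
  also have "\<dots> = (1 - x * x) ^ t" by (simp add: power_mult_distrib[symmetric] algebra_simps)
  also have "\<dots> \<le> 1" using assms by (intro power_le_one) (simp_all add: mult_le_one)
  finally show ?thesis using pos by (simp add: field_simps)
qed


lemma prob_bound:
  assumes t1: "t \<ge> 1" and tn: "t * (K + 1) \<le> n"
  shows "prob_colorable n (CG (K + 1) t) K (K + 1) \<le> 1 / (1 + real t / real (K + 1) ^ K)"
proof -
  define m where "m = K + 1"
  define A where "A = {B. B \<subseteq> {1..K+1} \<and> card B = K}"
  define a where "a = card A"
  have a: "a = K + 1" unfolding a_def A_def by (subst n_subsets) simp_all
  have finA: "finite A" unfolding A_def by auto
  have LA: "list_assignments n K (K + 1) = SA A n"
    unfolding list_assignments_def SA_def A_def by auto
  define r where "r = n - t * m"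
  have nr: "n = t * m + r" using tn unfolding r_def m_def by simp
  define P where "P = (\<lambda>L. \<forall>j<t. NC m (shift (j * m) m L))"
  have sub: "{L \<in> SA A n. list_colorable n (CG m t) L} \<subseteq>
      {L \<in> SA A (t * m + r). P (trunc (t * m) L) \<and> (\<lambda>_. True) (shift (t * m) r L)}"
  proof
    fix L assume L: "L \<in> {L \<in> SA A n. list_colorable n (CG m t) L}"
    have "P (trunc (t * m) L)" unfolding P_def
    proof (intro allI impI)
      fix j assume j: "j < t"
      have "NC m (shift (j * m) m L)"
        by (rule colorable_NC[of m K L A n "K+1" t j]) (use L j tn in \<open>auto simp: m_def A_def\<close>)
      then show "NC m (shift (j * m) m (trunc (t * m) L))" using shift_trunc[OF j] by simp
    qed
    then show "L \<in> {L \<in> SA A (t * m + r). P (trunc (t * m) L) \<and> (\<lambda>_. True) (shift (t * m) r L)}"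
      using L nr by simp
  qed
  have c2: "card {L \<in> SA A (t * m + r). P (trunc (t * m) L) \<and> (\<lambda>_. True) (shift (t * m) r L)}
      = (a ^ m - a) ^ t * a ^ r"
  proof -
    have e: "{L \<in> SA A (t * m). P L} = GS A m t" unfolding GS_def P_def by simp
    have "card {L \<in> SA A (t * m + r). P (trunc (t * m) L) \<and> (\<lambda>_. True) (shift (t * m) r L)}
        = card {L \<in> SA A (t * m). P L} * card {g \<in> SA A r. True}"
      by (rule split_card)
    also have "\<dots> = card (GS A m t) * a ^ r" using e card_SA[of A r] a_def by simp
    also have "\<dots> = (a ^ m - a) ^ t * a ^ r"
      using card_GS[of A m t] card_NC[OF finA, of m] a_def m_def by simp
    finally show ?thesis .
  qed
  have finS: "finite (SA A n)"
    by (rule card_ge_0_finite) (simp add: card_SA a_def[symmetric] a)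
  have "card {L \<in> SA A n. list_colorable n (CG m t) L} \<le> (a ^ m - a) ^ t * a ^ r"
  proof -
    have "finite (SA A (t * m + r))" using finS nr by simp
    then have fin2: "finite {L \<in> SA A (t * m + r). P (trunc (t * m) L) \<and> (\<lambda>_. True) (shift (t * m) r L)}"
      by (rule finite_subset[rotated]) auto
    show ?thesis using card_mono[OF fin2 sub] c2 by simp
  qed
  then have num: "real (card {L \<in> SA A n. list_colorable n (CG m t) L}) \<le> (real a ^ m - real a) ^ t * real a ^ r"
  proof -
    have "a \<le> a ^ m" by (intro self_le_power) (simp_all add: a m_def)
    then have "real (a ^ m - a) = real a ^ m - real a" by (simp add: of_nat_diff)
    then show ?thesis using \<open>card _ \<le> _\<close>
      by (metis of_nat_le_iff of_nat_mult of_nat_power)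
  qed
  have apos: "0 < real a" using a by simp
  have prob: "prob_colorable n (CG m t) K (K + 1) \<le> (real a ^ m - real a) ^ t * real a ^ r / real a ^ n"
    unfolding prob_colorable_def LA using num apos
    by (simp add: card_SA a_def[symmetric] divide_right_mono)
  have "(real a ^ m - real a) ^ t * real a ^ r / real a ^ n = ((real a ^ m - real a) / real a ^ m) ^ t"
    using apos by (simp add: nr power_add power_mult power_divide field_simps mult.commute)
  also have "(real a ^ m - real a) / real a ^ m = 1 - 1 / real a ^ K"
    using apos by (simp add: m_def field_simps)
  also have "(1 - 1 / real a ^ K) ^ t \<le> 1 / (1 + real t * (1 / real a ^ K))"
    using apos a by (intro pow_bound) (simp_all add: one_le_power)
  finally show ?thesis using prob a by (simp add: m_def)
qed

lemma degree_CG: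
  assumes m: "0 < m" and tn: "t * m \<le> n"
  shows "degree n (CG m t) v = (if v < t * m then m - 1 else 0)"
proof (cases "v < t * m")
  case True
  define b where "b = v div m"
  have vb: "b * m \<le> v \<and> v < b * m + m" unfolding b_def using blk_iff[OF m, of v "v div m"] by simp
  have bt: "b * m + m \<le> t * m"
  proof -
    have "b < t" using True b_def by (simp add: less_mult_imp_div_less)
    then have "(b + 1) * m \<le> t * m" by (intro mult_le_mono1) simp
    then show ?thesis by simp
  qed
  have "{u. u < n \<and> CG m t v u} = {b * m..<b * m + m} - {v}"
    using True tn bt unfolding CG_def b_def[symmetric]
    by (auto simp: blk_iff[OF m] b_def[symmetric] eq_commute[of b])
  then show ?thesis using True vb unfolding degree_def by simp
next
  case False
  then show ?thesis unfolding degree_def CG_def by simp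
qed

lemma maxdeg_CG:
  assumes m: "0 < m" and t: "t \<ge> 1" and tn: "t * m \<le> n"
  shows "max_degree n (CG m t) = m - 1"
  unfolding max_degree_def
proof (rule Max_eqI)
  show "finite (insert 0 (degree n (CG m t) ` {..<n}))" by simp
  show "\<And>y. y \<in> insert 0 (degree n (CG m t) ` {..<n}) \<Longrightarrow> y \<le> m - 1"
    using degree_CG[OF m tn] by auto
  have "0 < t * m" using m t by simp
  then have "degree n (CG m t) 0 = m - 1" using degree_CG[OF m tn] by simp
  moreover have "0 < n" using \<open>0 < t * m\<close> tn by (rule less_le_trans)
  ultimately show "m - 1 \<in> insert 0 (degree n (CG m t) ` {..<n})" by force
qed


lemma graph_on_CG:
  assumes "t * m \<le> n"
  shows "graph_on n (CG m t)"
  using assms unfolding graph_on_def CG_def by auto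

lemma final_bound:
  fixes n K :: nat
  assumes n1: "1 \<le> n" and MM: "real (K + 1) ^ (K + 1) \<le> sqrt (real n)"
  shows "graph_on n (CG (K + 1) (n div (K + 1))) \<and> max_degree n (CG (K + 1) (n div (K + 1))) = K
     \<and> prob_colorable n (CG (K + 1) (n div (K + 1))) K (K + 1) \<le> 1 / sqrt (real n)"
proof -
  define M where "M = K + 1"
  define t where "t = n div M"
  have M1: "1 \<le> M" unfolding M_def by simp
  have rM1: "1 \<le> real M" using M1 by simp
  have "real M \<le> real M ^ M" using rM1 M1 by (intro self_le_power) simp_all
  also have "\<dots> \<le> sqrt (real n)" using MM M_def by simp
  also have "sqrt (real n) \<le> real n"
  proof -
    have s1: "1 \<le> sqrt (real n)" using n1 by simp
    have "sqrt (real n) * 1 \<le> sqrt (real n) * sqrt (real n)" using s1 by (intro mult_left_mono) simp_all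
    also have "sqrt (real n) * sqrt (real n) = real n" by simp
    finally show ?thesis by simp
  qed
  finally have "M \<le> n" by simp
  then have t1: "1 \<le> t" unfolding t_def using div_le_mono[OF \<open>M \<le> n\<close>, of M] M1 by simp
  have tn: "t * M \<le> n" unfolding t_def by simp
  have "n < (t + 1) * M" unfolding t_def using M1
    by (metis div_less_iff_less_mult less_add_one less_le_trans zero_less_one)
  then have "real n < (real t + 1) * real M" by (metis of_nat_1 of_nat_add of_nat_less_iff of_nat_mult)
  then have tlow: "real n / real M - 1 \<le> real t" using rM1 by (simp add: field_simps)
  have MK1: "1 \<le> real M ^ K" using rM1 by (simp add: one_le_power)
  have MKM: "real M ^ K * real M \<le> sqrt (real n)" using MM M_def by (simp add: mult.commute)
  have sq: "0 < sqrt (real n)" using n1 by simp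
  have "sqrt (real n) - 1 \<le> real n / (real M ^ K * real M) - 1 / real M ^ K"
  proof -
    have "sqrt (real n) = real n / sqrt (real n)" using sq by (simp add: field_simps)
    also have "\<dots> \<le> real n / (real M ^ K * real M)"
    proof -
      have pp: "0 < real M ^ K * real M" using rM1 MK1 by simp
      show ?thesis using MKM mult_pos_pos[OF sq pp] by (intro divide_left_mono) simp_all
    qed
    finally have a: "sqrt (real n) \<le> real n / (real M ^ K * real M)" .
    have b: "1 / real M ^ K \<le> 1" using MK1 M1 by (simp add: divide_le_eq_1)
    show ?thesis using a b by linarith
  qed
  also have "real n / (real M ^ K * real M) - 1 / real M ^ K = (real n / real M - 1) / real M ^ K"
    using rM1 MK1 by (simp add: field_simps)
  also have "\<dots> \<le> real t / real M ^ K" using tlow MK1 by (intro divide_right_mono) simp_all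
  finally have key: "sqrt (real n) \<le> 1 + real t / real M ^ K" by linarith
  have "prob_colorable n (CG (K + 1) t) K (K + 1) \<le> 1 / (1 + real t / real (K + 1) ^ K)"
    by (rule prob_bound) (use t1 tn M_def in simp_all)
  also have "\<dots> \<le> 1 / sqrt (real n)"
  proof -
    have k2: "sqrt (real n) \<le> 1 + real t / real (K + 1) ^ K" using key M_def by simp
    have pos: "0 < (1 + real t / real (K + 1) ^ K) * sqrt (real n)"
      using sq k2 by (intro mult_pos_pos) linarith+
    show ?thesis using k2 pos by (intro divide_left_mono) simp_all
  qed
  finally have p: "prob_colorable n (CG (K + 1) t) K (K + 1) \<le> 1 / sqrt (real n)" .
  have g: "graph_on n (CG M t)" using tn by (rule graph_on_CG)
  have d: "max_degree n (CG M t) = M - 1" using M1 t1 tn by (intro maxdeg_CG) simp_all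
  show ?thesis using p g d unfolding t_def M_def by simp
qed


lemma pointwise_bound:
  fixes n k :: nat
  assumes L1: "1 < ln (real n)" and LL: "1 \<le> 2 * ln (ln (real n))"
    and q4: "1 \<le> 1/4 * (ln (real n) / ln (ln (real n)))"
    and kb: "real k \<le> 1/4 * \<bar>ln (real n) / ln (ln (real n))\<bar>"
  shows "real (k + 1) ^ (k + 1) \<le> sqrt (real n)"
proof -
  define L where "L = ln (real n)"
  define LLn where "LLn = ln L"
  define q where "q = L / LLn"
  have Lpos: "0 < L" using L1 L_def by simp
  have LLpos: "0 < LLn" using LL unfolding LLn_def L_def by linarith
  have qpos: "0 < q" using Lpos LLpos q_def by simp
  have npos: "0 < real n"
  proof (rule ccontr)
    assume "\<not> 0 < real n" then have "n = 0" by simp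
    then show False using L1 by simp
  qed
  define m where "m = real (k + 1)"
  have m1: "1 \<le> m" unfolding m_def by simp
  have kq: "real k \<le> q / 4" using kb qpos unfolding q_def LLn_def L_def by simp
  have mq: "m \<le> q / 2" using kq q4 unfolding m_def q_def LLn_def L_def by simp
  have q2L: "q / 2 \<le> L"
  proof -
    have "q / 2 = L / (2 * LLn)" unfolding q_def by simp
    also have "\<dots> \<le> L / 1" using LL Lpos LLpos unfolding LLn_def by (intro divide_left_mono) (simp_all add: L_def)
    finally show ?thesis by simp
  qed
  have lnm: "ln m \<le> LLn"
  proof -
    have "m \<le> L" using mq q2L by linarith
    then show ?thesis unfolding LLn_def using m1 by (subst ln_le_cancel_iff) simp_all
  qed
  have lnm0: "0 \<le> ln m" using m1 by simp
  have "m * ln m \<le> (q / 2) * LLn" using mq lnm lnm0 qpos by (intro mult_mono) simp_all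
  also have "\<dots> = L / 2" unfolding q_def using LLpos by simp
  finally have mlm: "m * ln m \<le> L / 2" .
  have "real (k + 1) ^ (k + 1) = m powr m"
    unfolding m_def by (subst powr_realpow) simp_all
  also have "\<dots> = exp (m * ln m)" using m1 by (simp add: powr_def)
  also have "\<dots> \<le> exp (L / 2)" using mlm by simp
  also have "exp (L / 2) = sqrt (real n)"
  proof -
    have "ln (sqrt (real n)) = L / 2" unfolding L_def using npos by (simp add: ln_sqrt)
    then have "exp (L / 2) = exp (ln (sqrt (real n)))" by simp
    also have "\<dots> = sqrt (real n)" using npos by simp
    finally show ?thesis .
  qed
  finally show ?thesis .
qed

theorem mainTheorem16:
  fixes K :: "nat \<Rightarrow> nat"
  assumes "(\<lambda>n. real (K n)) \<in> o(\<lambda>n. ln (real n) / ln (ln (real n)))"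
  shows "\<exists>G :: nat \<Rightarrow> (nat \<Rightarrow> nat \<Rightarrow> bool).
           (\<forall>\<^sub>F n in sequentially.
              graph_on n (G n) \<and> K n \<le> max_degree n (G n) + 1) \<and>
           ((\<lambda>n. prob_colorable n (G n) (K n) (max_degree n (G n) + 1)) \<longlonglongrightarrow> 0)"
proof -
  define G where "G = (\<lambda>n. CG (K n + 1) (n div (K n + 1)))"
  have e0: "\<forall>\<^sub>F n in sequentially. norm (real (K n)) \<le> 1/4 * norm (ln (real n) / ln (ln (real n)))"
    using landau_o.smallD[OF assms, of "1/4"] by simp
  have e1: "\<forall>\<^sub>F n in sequentially. 1 \<le> 1/4 * (ln (real n) / ln (ln (real n)))" by real_asymp
  have e2: "\<forall>\<^sub>F n in sequentially. 1 \<le> 2 * ln (ln (real n))" by real_asymp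
  have e3: "\<forall>\<^sub>F n in sequentially. 1 < ln (real n)" by real_asymp
  have e4: "\<forall>\<^sub>F n::nat in sequentially. 1 \<le> n" by (rule eventually_ge_at_top)
  have ev: "\<forall>\<^sub>F n in sequentially. graph_on n (G n) \<and> max_degree n (G n) = K n
      \<and> prob_colorable n (G n) (K n) (K n + 1) \<le> 1 / sqrt (real n)"
    using e0 e1 e2 e3 e4
  proof eventually_elim
    case (elim n)
    have "real (K n + 1) ^ (K n + 1) \<le> sqrt (real n)"
      by (rule pointwise_bound) (use elim in simp_all)
    then show ?case using final_bound[OF \<open>1 \<le> n\<close>] unfolding G_def by blast
  qed
  show ?thesis
  proof (intro exI conjI)
    show "\<forall>\<^sub>F n in sequentially. graph_on n (G n) \<and> K n \<le> max_degree n (G n) + 1"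
      using ev by eventually_elim simp
    have up: "\<forall>\<^sub>F n in sequentially. prob_colorable n (G n) (K n) (max_degree n (G n) + 1) \<le> 1 / sqrt (real n)"
      using ev by eventually_elim simp
    have low: "\<forall>\<^sub>F n in sequentially. 0 \<le> prob_colorable n (G n) (K n) (max_degree n (G n) + 1)"
      by (simp add: prob_colorable_def)
    have lim: "(\<lambda>n. 1 / sqrt (real n)) \<longlonglongrightarrow> 0" by real_asymp
    show "(\<lambda>n. prob_colorable n (G n) (K n) (max_degree n (G n) + 1)) \<longlonglongrightarrow> 0"
      by (rule tendsto_sandwich[OF low up tendsto_const lim])
  qed
qed

end
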